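(* Let $\mathbf{M}=(M_1,\dots,M_n)$ be a POVM on $\mathbb{C}^d$ with all nonzero effects of rank one, which is an extreme point of the convex set of $n$-outcome POVMs on $\mathbb{C}^d$. Then there exist a POVM $\mathbf{M}'=(M'_1,\dots,M'_{n'})$ on $\mathbb{C}^d$ and a classical post-processing $\mathcal{Q}$ with $\mathbf{M}=\mathcal{Q}(\mathbf{M}')$ such that (i) $n'\le2d^2$, and (ii) for every $j\in[n']$, $M'_j=\alpha'_j\ket{\psi_j}\bra{\psi_j}$ with a unit vector $\ket{\psi_j}$ and $0\le\alpha'_j\le\frac1d$.
   Context: A POVM on $\mathbb{C}^d$ is a tuple of positive semidefinite operators summing to $\mathbb{I}_d$; convex combinations are taken effect-wise. A classical post-processing $\mathcal{Q}$ is given by numbers $q_{i|j}\ge0$ with $\sum_iq_{i|j}=1$, and $\mathcal{Q}(\mathbf{M}')$ has effects $\sum_jq_{i|j}M'_j$. *)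

theory Defs
  imports "HOL-Analysis.Analysis"
begin

text \<open>Operators on the Hilbert space C^d are matrices of type complex^'d^'d,
  where 'd is a finite index type with CARD('d) = d.\<close>

definition cinner_vec :: "complex^'d \<Rightarrow> complex^'d \<Rightarrow> complex" where
  "cinner_vec x y = (\<Sum>i\<in>UNIV. cnj (x $ i) * y $ i)"

definition adjoint_mat :: "complex^'d^'d \<Rightarrow> complex^'d^'d" where
  "adjoint_mat A = (\<chi> i j. cnj (A $ j $ i))"

definition psd :: "complex^'d^'d \<Rightarrow> bool" where
  "psd A \<longleftrightarrow> adjoint_mat A = A \<and>
     (\<forall>v. cinner_vec v (A *v v) \<in> \<real> \<and> 0 \<le> Re (cinner_vec v (A *v v)))"

definition povm :: "nat \<Rightarrow> (nat \<Rightarrow> complex^'d^'d) \<Rightarrow> bool" where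
  "povm n M \<longleftrightarrow> (\<forall>i<n. psd (M i)) \<and> (\<Sum>i<n. M i) = mat 1"

definition extreme_povm :: "nat \<Rightarrow> (nat \<Rightarrow> complex^'d^'d) \<Rightarrow> bool" where
  "extreme_povm n M \<longleftrightarrow> povm n M \<and>
     (\<forall>A B (t::real). povm n A \<and> povm n B \<and> 0 < t \<and> t < 1 \<and>
        (\<forall>i<n. M i = t *\<^sub>R A i + (1 - t) *\<^sub>R B i)
        \<longrightarrow> (\<forall>i<n. A i = M i \<and> B i = M i))"

definition proj :: "complex^'d \<Rightarrow> complex^'d^'d" where
  "proj \<psi> = (\<chi> a b. \<psi> $ a * cnj (\<psi> $ b))"

text \<open>Classical post-processing q (stochastic matrix q i j = q_{i|j}) from an n'-outcome
  POVM to an n-outcome POVM.\<close>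
definition post_processing :: "nat \<Rightarrow> nat \<Rightarrow> (nat \<Rightarrow> nat \<Rightarrow> real) \<Rightarrow> bool" where
  "post_processing n n' q \<longleftrightarrow>
     (\<forall>i<n. \<forall>j<n'. 0 \<le> q i j) \<and> (\<forall>j<n'. (\<Sum>i<n. q i j) = 1)"

definition apply_pp :: "nat \<Rightarrow> (nat \<Rightarrow> nat \<Rightarrow> real) \<Rightarrow> (nat \<Rightarrow> complex^'d^'d) \<Rightarrow> nat \<Rightarrow> complex^'d^'d" where
  "apply_pp n' q M' i = (\<Sum>j<n'. q i j *\<^sub>R M' j)"

end

theory Submission
  imports Defs
begin


lemma rank1_outer:
  fixes M :: "complex^'d^'d"
  assumes "rank M = 1"
  shows "\<exists>c w. \<forall>a b. M$a$b = c a * w$b"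
proof -
  obtain B where B: "B \<subseteq> rows M" "vec.independent B" "rows M \<subseteq> vec.span B" "card B = vec.dim (rows M)"
    by (rule vec.basis_exists)
  then have "card B = 1" using assms by (simp add: row_rank_def_gen)
  then obtain w where "B = {w}" by (auto simp: card_Suc_eq)
  then have "\<forall>a. \<exists>k. row a M = k *s w" using B(3) by (auto simp: vec.span_singleton rows_def)
  then obtain c where "\<forall>a. row a M = c a *s w" by metis
  then have "\<forall>a b. M$a$b = c a * w$b"
    by (metis row_def vec_lambda_beta vector_smult_component)
  then show ?thesis by blast
qed

lemma psd_herm: "psd M \<Longrightarrow> M$b$a = cnj (M$a$b)"
  unfolding psd_def adjoint_mat_def by (metis complex_cnj_cnj vec_lambda_beta)

lemma psd_diag:
  fixes M :: "complex^'d^'d"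
  assumes "psd M" shows "M$a$a \<in> \<real> \<and> 0 \<le> Re (M$a$a)"
proof -
  have "cinner_vec (axis a 1) (M *v axis a 1) = M$a$a"
    unfolding cinner_vec_def matrix_vector_mult_def axis_def
    by (simp add: if_distrib[of cnj] if_distrib[of "\<lambda>x. x * _"] if_distrib[of "\<lambda>x. _ * x"] cong: if_cong)
  then show ?thesis using assms unfolding psd_def by metis
qed



lemma psd_rank1_proj:
  fixes M :: "complex^'d^'d"
  assumes p: "psd M" and nz: "M \<noteq> 0" and r: "rank M = 1"
  shows "\<exists>\<phi>. M = proj \<phi>"
proof -
  obtain c w where cw: "\<And>a b. M$a$b = c a * w$b" using rank1_outer[OF r] by blast
  have minor: "M$a$b * M$e$f = M$a$f * M$e$b" for a b e f by (simp add: cw)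
  obtain a0 b0 where ab: "M$a0$b0 \<noteq> 0" using nz by (metis vec_eq_iff zero_index)
  have "M$a0$a0 * M$b0$b0 = M$a0$b0 * cnj (M$a0$b0)"
    using minor[of a0 a0 b0 b0] psd_herm[OF p, of a0 b0] by simp
  then have d0: "M$a0$a0 \<noteq> 0" using ab by auto
  define t where "t = Re (M$a0$a0)"
  have tM: "M$a0$a0 = of_real t" using psd_diag[OF p, of a0] unfolding t_def
    by (metis Reals_cases Re_complex_of_real)
  have tpos: "t > 0" using psd_diag[OF p, of a0] d0 tM unfolding t_def by (metis less_eq_real_def of_real_0)
  define \<phi> where "\<phi> = (\<chi> a. M$a$a0 / of_real (sqrt t))"
  have "M = proj \<phi>"
  proof -
    have "M$a$b = \<phi>$a * cnj (\<phi>$b)" for a b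
    proof -
      have "\<phi>$a * cnj (\<phi>$b) = M$a$a0 * M$a0$b / (of_real (sqrt t) * of_real (sqrt t))"
        unfolding \<phi>_def using psd_herm[OF p, of b a0] by simp
      also have "\<dots> = M$a$a0 * M$a0$b / M$a0$a0" using tpos tM
        by (metis abs_of_pos of_real_mult real_sqrt_mult_self)
      also have "\<dots> = M$a$b" using minor[of a a0 a0 b] d0
        by (simp add: field_simps)
      finally show ?thesis by simp
    qed
    then show ?thesis by (simp add: vec_eq_iff proj_def)
  qed
  then show ?thesis by blast
qed



lemma comp_scale: "(r *\<^sub>R w)$x = of_real r * (w$x :: complex)"
  by (simp only: vector_scaleR_component) (rule scaleR_conv_of_real)
lemma comp_scale2: "(r *\<^sub>R A)$x$y = of_real r * (A$x$y :: complex)"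
  by (simp only: vector_scaleR_component) (rule scaleR_conv_of_real)
lemma cinner_scale: "cinner_vec v (r *\<^sub>R w) = of_real r * cinner_vec v w"
  unfolding cinner_vec_def sum_distrib_left comp_scale
  by (simp add: mult.left_commute)
lemma adj_scale: "adjoint_mat (r *\<^sub>R A) = r *\<^sub>R adjoint_mat A"
    by (simp add: adjoint_mat_def vec_eq_iff)
lemma mv_scale: "(r *\<^sub>R A) *v v = r *\<^sub>R (A *v (v::complex^'d))"
  for A :: "complex^'d^'e"
  unfolding vec_eq_iff matrix_vector_mult_def comp_scale2 comp_scale
  by (simp add: sum_distrib_left mult.assoc)
lemma psd_scale:
  fixes A :: "complex^'d^'d"
  assumes "psd A" "0 \<le> r" shows "psd (r *\<^sub>R A)"
proof -
  have "cinner_vec v ((r *\<^sub>R A) *v v) = of_real r * cinner_vec v (A *v v)" for v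
    unfolding mv_scale by (rule cinner_scale)
  then show ?thesis using assms unfolding psd_def adj_scale
    by (simp add: Reals_mult)
qed

lemma dep_family:
  fixes g :: "nat \<Rightarrow> 'b::euclidean_space"
  assumes "finite S" "card S > DIM('b)"
  shows "\<exists>c. (\<exists>i\<in>S. c i \<noteq> 0) \<and> (\<Sum>i\<in>S. c i *\<^sub>R g i) = 0"
proof (cases "inj_on g S")
  case False
  then obtain i j where ij: "i \<in> S" "j \<in> S" "i \<noteq> j" "g i = g j" by (auto simp: inj_on_def)
  define c where "c k = (if k = i then 1 else if k = j then -1 else (0::real))" for k
  have "(\<Sum>k\<in>S. c k *\<^sub>R g k) = (\<Sum>k\<in>S. (if k = i then g i else 0) - (if k = j then g j else 0))"
    by (rule sum.cong) (auto simp: c_def ij)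
  also have "\<dots> = 0" using ij assms(1) by (simp add: sum_subtractf)
  finally show ?thesis using ij by (auto simp: c_def intro!: exI[of _ c])
next
  case True
  then have "card (g ` S) > DIM('b)" using assms by (simp add: card_image)
  then have "dependent (g ` S)" using independent_bound[of "g ` S"] by linarith
  moreover have "finite (g ` S)" using assms(1) by simp
  ultimately obtain u where u: "\<exists>v\<in>g`S. u v \<noteq> 0" "(\<Sum>v\<in>g`S. u v *\<^sub>R v) = 0"
    using dependent_finite by blast
  have "(\<Sum>i\<in>S. u (g i) *\<^sub>R g i) = 0" using u(2) True by (simp add: sum.reindex)
  then show ?thesis using u(1) by auto
qed

definition fmap :: "complex^'d^'d \<Rightarrow> real^('d\<times>'d)" where
  "fmap H = (\<chi> p. Re (H $ fst p $ snd p) + Im (H $ fst p $ snd p))"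

lemma fmap_sum: "fmap (\<Sum>i\<in>S. c i *\<^sub>R H i) = (\<Sum>i\<in>S. c i *\<^sub>R fmap (H i))"
  unfolding fmap_def vec_eq_iff
  by (simp add: sum_component Re_sum Im_sum sum.distrib[symmetric] distrib_left)

lemma herm_fmap_zero:
  fixes H :: "complex^'d^'d"
  assumes "\<And>a b. H$b$a = cnj (H$a$b)" "fmap H = 0"
  shows "H = 0"
proof -
  have "H$a$b = 0" for a b
  proof -
    have fm: "fmap H $ (x,y) = Re (H$x$y) + Im (H$x$y)" for x y by (simp add: fmap_def)
    have 1: "Re (H$a$b) + Im (H$a$b) = 0" using assms(2) fm[of a b] by simp
    have "Re (H$b$a) + Im (H$b$a) = 0" using assms(2) fm[of b a] by simp
    then have 2: "Re (H$a$b) - Im (H$a$b) = 0" using assms(1)[of a b] by simp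
    from 1 2 show ?thesis by (simp add: complex_eq_iff)
  qed
  then show ?thesis by (simp add: vec_eq_iff)
qed




lemma extreme_card:
  fixes M :: "nat \<Rightarrow> complex^'d^'d"
  assumes ext: "extreme_povm n M"
  shows "card {i. i<n \<and> M i \<noteq> 0} \<le> CARD('d)^2"
proof (rule ccontr)
  define S where "S = {i. i<n \<and> M i \<noteq> 0}"
  assume "\<not> card {i. i<n \<and> M i \<noteq> 0} \<le> CARD('d)^2"
  then have cS: "card S > DIM(real^('d\<times>'d))" by (simp add: S_def power2_eq_square)
  have fS: "finite S" by (simp add: S_def)
  have pv: "povm n M" using ext by (simp add: extreme_povm_def)
  then have psdM: "\<And>i. i < n \<Longrightarrow> psd (M i)" and sumM: "(\<Sum>i<n. M i) = mat 1"
    by (auto simp: povm_def)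
  obtain c where c: "\<exists>i\<in>S. c i \<noteq> 0" "(\<Sum>i\<in>S. c i *\<^sub>R fmap (M i)) = 0"
    using dep_family[OF fS cS, of "\<lambda>i. fmap (M i)"] by blast
  define H where "H = (\<Sum>i\<in>S. c i *\<^sub>R M i)"
  have "fmap H = 0" using c(2) by (simp add: H_def fmap_sum)
  moreover have "H$b$a = cnj (H$a$b)" for a b
  proof -
    have "H$b$a = (\<Sum>i\<in>S. c i *\<^sub>R (M i $b$a))" by (simp add: H_def sum_component)
    also have "\<dots> = (\<Sum>i\<in>S. c i *\<^sub>R cnj (M i $a$b))"
    proof (rule sum.cong[OF refl])
      fix i assume "i \<in> S"
      then have "i < n" by (simp add: S_def)
      then show "c i *\<^sub>R (M i $b$a) = c i *\<^sub>R cnj (M i $a$b)"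
        using psd_herm[OF psdM[of i], of b a] by metis
    qed
    also have "\<dots> = cnj (H$a$b)" by (simp add: H_def sum_component cnj_sum)
    finally show ?thesis .
  qed
  ultimately have H0: "H = 0" using herm_fmap_zero by blast
  define c' where "c' i = (if i \<in> S then c i else 0)" for i
  have sc: "(\<Sum>i<n. c' i *\<^sub>R M i) = 0"
  proof -
    have "(\<Sum>i<n. c' i *\<^sub>R M i) = (\<Sum>i\<in>S. c' i *\<^sub>R M i)"
      by (rule sum.mono_neutral_right) (auto simp: S_def c'_def)
    also have "\<dots> = H" unfolding H_def by (rule sum.cong) (auto simp: c'_def)
    finally show ?thesis using H0 by simp
  qed
  define e where "e = 1 / (1 + (\<Sum>i<n. \<bar>c' i\<bar>))"
  have sp: "0 \<le> (\<Sum>i<n. \<bar>c' i\<bar>)" by (simp add: sum_nonneg)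
  have epos: "e > 0" unfolding e_def by (rule divide_pos_pos) (use sp in linarith)+
  have small: "e * \<bar>c' i\<bar> < 1" for i
  proof (cases "i < n")
    case True
    then have "\<bar>c' i\<bar> \<le> (\<Sum>i<n. \<bar>c' i\<bar>)" by (intro member_le_sum) auto
    then show ?thesis using sp by (simp add: e_def field_simps)
  next
    case False then show ?thesis by (simp add: c'_def S_def)
  qed
  have cp: "0 \<le> 1 + e * c' i" "0 \<le> 1 - e * c' i" for i
  proof -
    have "\<bar>e * c' i\<bar> < 1" using small[of i] epos by (simp add: abs_mult)
    then have "-1 < e * c' i \<and> e * c' i < 1" by (simp add: abs_less_iff)
    then show "0 \<le> 1 + e * c' i" "0 \<le> 1 - e * c' i" by linarith+
  qed
  define A where "A i = (1 + e * c' i) *\<^sub>R M i" for i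
  define B where "B i = (1 - e * c' i) *\<^sub>R M i" for i
  have pA: "povm n A" unfolding povm_def
  proof (intro conjI allI impI)
    fix i assume "i < n"
    show "psd (A i)" unfolding A_def by (rule psd_scale[OF psdM[OF \<open>i<n\<close>] cp(1)])
  next
    have "(\<Sum>i<n. A i) = (\<Sum>i<n. M i) + e *\<^sub>R (\<Sum>i<n. c' i *\<^sub>R M i)"
      by (simp add: A_def scaleR_add_left sum.distrib scaleR_sum_right)
    then show "(\<Sum>i<n. A i) = mat 1" using sumM sc by simp
  qed
  have pB: "povm n B" unfolding povm_def
  proof (intro conjI allI impI)
    fix i assume "i < n"
    show "psd (B i)" unfolding B_def by (rule psd_scale[OF psdM[OF \<open>i<n\<close>] cp(2)])
  next
    have "(\<Sum>i<n. B i) = (\<Sum>i<n. M i) - e *\<^sub>R (\<Sum>i<n. c' i *\<^sub>R M i)"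
      by (simp add: B_def scaleR_diff_left sum_subtractf scaleR_sum_right)
    then show "(\<Sum>i<n. B i) = mat 1" using sumM sc by simp
  qed
  have half: "\<forall>i<n. M i = (1/2::real) *\<^sub>R A i + (1 - 1/2) *\<^sub>R B i"
  proof (intro allI impI)
    fix i
    have "(1/2::real) *\<^sub>R A i + (1 - 1/2) *\<^sub>R B i
        = ((1/2) * (1 + e * c' i) + (1 - 1/2) * (1 - e * c' i)) *\<^sub>R M i"
      unfolding A_def B_def by (simp only: scaleR_scaleR) (rule scaleR_add_left[symmetric])
    also have "(1/2) * (1 + e * c' i) + (1 - 1/2) * (1 - e * c' i) = (1::real)"
      by (simp add: algebra_simps)
    finally show "M i = (1/2::real) *\<^sub>R A i + (1 - 1/2) *\<^sub>R B i" by simp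
  qed
  have E: "\<And>A B (t::real). povm n A \<Longrightarrow> povm n B \<Longrightarrow> 0<t \<Longrightarrow> t<1 \<Longrightarrow>
      (\<forall>i<n. M i = t *\<^sub>R A i + (1-t) *\<^sub>R B i) \<Longrightarrow> \<forall>i<n. A i = M i \<and> B i = M i"
    using ext unfolding extreme_povm_def by blast
  have AM: "\<forall>i<n. A i = M i" using E[OF pA pB _ _ half] by simp
  obtain i0 where i0: "i0 \<in> S" "c i0 \<noteq> 0" using c(1) by blast
  then have "(1 + e * c' i0) *\<^sub>R M i0 = M i0" using AM by (auto simp: A_def S_def)
  then have "(e * c' i0) *\<^sub>R M i0 = 0" by (simp add: scaleR_add_left)
  then have "M i0 = 0" using i0 epos by (simp add: c'_def)
  then show False using i0(1) unfolding S_def by blast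
qed



definition mtr :: "complex^'d^'d \<Rightarrow> complex" where "mtr H = (\<Sum>a\<in>UNIV. H$a$a)"

lemma mtr_sum: "mtr (\<Sum>i\<in>S. H i) = (\<Sum>i\<in>S. mtr (H i))"
  unfolding mtr_def by (simp add: sum_component sum.swap[of _ S])

lemma mtr_id: "mtr (mat 1 :: complex^'d^'d) = of_nat CARD('d)"
  by (simp add: mtr_def mat_def)

lemma norm_sq_vec: "(norm (x :: complex^'d))^2 = (\<Sum>a\<in>UNIV. (norm (x$a))^2)"
  unfolding norm_vec_def L2_set_def by (simp add: sum_nonneg)

lemma mtr_proj: "Re (mtr (proj \<phi>)) = (norm \<phi>)^2"
proof -
  have "Re (mtr (proj \<phi>)) = (\<Sum>a\<in>UNIV. Re (\<phi>$a * cnj (\<phi>$a)))"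
    by (simp add: mtr_def proj_def Re_sum)
  also have "\<dots> = (\<Sum>a\<in>UNIV. (norm (\<phi>$a))^2)"
    by (rule sum.cong[OF refl]) (metis Re_complex_of_real complex_norm_square)
  finally show ?thesis by (simp add: norm_sq_vec)
qed

lemma proj_scale: "proj (c *\<^sub>R \<phi>) = (c*c) *\<^sub>R proj \<phi>"
  unfolding vec_eq_iff proj_def comp_scale2 comp_scale
  by (simp add: algebra_simps)

lemma sum_list_rep: "sum_list (replicate k x) = real k *\<^sub>R (x :: 'a::real_vector)"
  by (induct k) (simp_all add: scaleR_add_left)

lemma sum_list_concat_rep:
  "sum_list (map h (concat (map (\<lambda>l. replicate (m l) l) [0..<n])))
     = (\<Sum>l<n. real (m l) *\<^sub>R (h l :: 'a::real_vector))"
  by (induct n) (simp_all add: sum_list_rep)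

lemma length_concat_rep:
  "length (concat (map (\<lambda>l. replicate (m l) l) [0..<n])) = (\<Sum>l<n. m l)"
  by (induct n) simp_all

lemma set_concat_rep:
  "set (concat (map (\<lambda>l. replicate (m l) l) [0..<n])) = {l. l < n \<and> m l > 0}"
  by auto

lemma sum_nth_map: "(\<Sum>j<length L. h (L!j)) = sum_list (map h L)"
  by (simp add: sum_list_sum_nth lessThan_atLeast0)




theorem lemma8:
  fixes n :: nat and M :: "nat \<Rightarrow> complex^'d^'d"
  assumes "povm n M"
    and "\<forall>i<n. M i \<noteq> 0 \<longrightarrow> rank (M i) = 1"
    and "extreme_povm n M"
  shows "\<exists>n' M' q. povm n' M' \<and> post_processing n n' q \<and>
           (\<forall>i<n. M i = apply_pp n' q M' i) \<and>
           n' \<le> 2 * CARD('d)^2 \<and>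
           (\<forall>j<n'. \<exists>\<alpha> \<psi>. norm \<psi> = 1 \<and> 0 \<le> \<alpha> \<and> \<alpha> \<le> 1 / real CARD('d) \<and>
                        M' j = \<alpha> *\<^sub>R proj \<psi>)"
proof -
  define d where "d = CARD('d)"
  have dpos: "d > 0" by (simp add: d_def)
  have psdM: "\<And>i. i < n \<Longrightarrow> psd (M i)" and sumM: "(\<Sum>i<n. M i) = mat 1"
    using assms(1) by (auto simp: povm_def)
  define tr where "tr l = Re (mtr (M l))" for l
  define \<phi> where "\<phi> l = (SOME \<phi>. M l = proj \<phi>)" for l
  have Mphi: "M l = proj (\<phi> l)" if "l < n" "M l \<noteq> 0" for l
  proof -
    have "\<exists>\<phi>. M l = proj \<phi>" using psd_rank1_proj[OF psdM[OF that(1)] that(2)] assms(2) that by blast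
    then show ?thesis unfolding \<phi>_def by (rule someI_ex)
  qed
  have trphi: "tr l = (norm (\<phi> l))^2" if "l < n" "M l \<noteq> 0" for l
    using Mphi[OF that] mtr_proj by (simp add: tr_def)
  have phinz: "\<phi> l \<noteq> 0" if "l < n" "M l \<noteq> 0" for l
  proof
    assume "\<phi> l = 0"
    then have "M l = 0" using Mphi[OF that] by (simp add: proj_def vec_eq_iff)
    then show False using that by simp
  qed
  have trpos: "tr l > 0" if "l < n" "M l \<noteq> 0" for l
    using trphi[OF that] phinz[OF that] by simp
  define m where "m l = (if M l = 0 then 0 else nat \<lceil>real d * tr l\<rceil>)" for l
  have mpos: "m l > 0" if "l < n" "M l \<noteq> 0" for l
    using trpos[OF that] that dpos by (simp add: m_def)
  have m0: "M l = 0" if "l < n" "m l = 0" for l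
    using mpos[OF that(1)] that(2) by auto
  have mge: "real d * tr l \<le> real (m l)" if "l < n" "M l \<noteq> 0" for l
    using that by (simp add: m_def) linarith
  have mle: "real (m l) \<le> real d * tr l + 1" if "l < n" "M l \<noteq> 0" for l
    using that trpos[OF that] dpos by (simp add: m_def)
  define L where "L = concat (map (\<lambda>l. replicate (m l) l) [0..<n])"
  define n' where "n' = length L"
  have setL: "set L = {l. l < n \<and> m l > 0}" unfolding L_def by (rule set_concat_rep)
  have Lj: "L!j < n" "M (L!j) \<noteq> 0" "m (L!j) > 0" if "j < n'" for j
  proof -
    have "L!j \<in> set L" using that by (simp add: n'_def)
    then show "L!j < n" "m (L!j) > 0" using setL by auto
    then show "M (L!j) \<noteq> 0" by (auto simp: m_def)
  qed
  define M' where "M' j = (1 / real (m (L!j))) *\<^sub>R M (L!j)" for j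
  define q where "q i j = (if L!j = i then 1 else (0::real))" for i j
  have key: "(\<Sum>j<n'. h (L!j)) = (\<Sum>l<n. real (m l) *\<^sub>R h l)" for h :: "nat \<Rightarrow> complex^'d^'d"
    unfolding n'_def sum_nth_map L_def by (rule sum_list_concat_rep)
  have mM: "real (m l) *\<^sub>R ((1 / real (m l)) *\<^sub>R M l) = M l" if "l < n" for l
  proof (cases "M l = 0")
    case True then show ?thesis by simp
  next
    case False then show ?thesis using mpos[OF that False] by simp
  qed
  have povm': "povm n' M'" unfolding povm_def
  proof (intro conjI allI impI)
    fix j assume "j < n'"
    show "psd (M' j)" unfolding M'_def by (rule psd_scale[OF psdM[OF Lj(1)[OF \<open>j<n'\<close>]]]) simp
  next
    have "(\<Sum>j<n'. M' j) = (\<Sum>l<n. real (m l) *\<^sub>R ((1 / real (m l)) *\<^sub>R M l))"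
      unfolding M'_def by (rule key)
    also have "\<dots> = (\<Sum>l<n. M l)" by (rule sum.cong[OF refl], rule mM, simp)
    finally show "(\<Sum>j<n'. M' j) = mat 1" using sumM by simp
  qed
  have pp: "post_processing n n' q" unfolding post_processing_def
  proof (intro conjI allI impI)
    fix j assume "j < n'"
    show "(\<Sum>i<n. q i j) = 1" using Lj(1)[OF \<open>j<n'\<close>] by (simp add: q_def)
  qed (simp add: q_def)
  have app: "M i = apply_pp n' q M' i" if "i < n" for i
  proof -
    have "apply_pp n' q M' i = (\<Sum>j<n'. (if L!j = i then (1 / real (m (L!j))) *\<^sub>R M (L!j) else 0))"
      unfolding apply_pp_def q_def M'_def by (rule sum.cong[OF refl]) simp
    also have "\<dots> = (\<Sum>l<n. real (m l) *\<^sub>R (if l = i then (1 / real (m l)) *\<^sub>R M l else 0))"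
      by (rule key)
    also have "\<dots> = (\<Sum>l<n. (if l = i then M l else 0))"
      by (rule sum.cong[OF refl]) (auto simp: mM m0)
    also have "\<dots> = M i" using that by simp
    finally show ?thesis by simp
  qed
  have bound: "n' \<le> 2 * d^2"
  proof -
    define S where "S = {l. l < n \<and> M l \<noteq> 0}"
    have cS: "card S \<le> d^2" using extreme_card[OF assms(3)] by (simp add: S_def d_def)
    have trsum: "(\<Sum>l<n. tr l) = real d"
    proof -
      have "(\<Sum>l<n. tr l) = Re (mtr (\<Sum>l<n. M l))" by (simp add: tr_def mtr_sum Re_sum)
      then show ?thesis using sumM mtr_id[where 'd='d] by (simp add: d_def)
    qed
    have tr0: "tr l = 0" if "M l = 0" for l using that by (simp add: tr_def mtr_def)
    have "real n' = (\<Sum>l<n. real (m l))" by (simp add: n'_def L_def length_concat_rep)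
    also have "\<dots> \<le> (\<Sum>l<n. real d * tr l + (if M l \<noteq> 0 then 1 else 0))"
    proof (rule sum_mono)
      fix l assume "l \<in> {..<n}"
      then show "real (m l) \<le> real d * tr l + (if M l \<noteq> 0 then 1 else 0)"
        using mle[of l] by (cases "M l = 0") (auto simp: m_def tr0)
    qed
    also have "\<dots> = real d * real d + real (card S)"
    proof -
      have "(\<Sum>l<n. (if M l \<noteq> 0 then 1 else 0::real)) = real (card S)"
      proof -
        have "(\<Sum>l<n. (if M l \<noteq> 0 then 1 else 0::real)) = (\<Sum>l\<in>S. 1)"
          unfolding S_def by (rule sum.mono_neutral_cong_right) auto
        then show ?thesis by simp
      qed
      then show ?thesis by (simp add: sum.distrib sum_distrib_left[symmetric] trsum)
    qed
    also have "\<dots> \<le> real (2 * d^2)" using cS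
      by (simp add: power2_eq_square) (metis of_nat_le_iff of_nat_mult)
    finally show ?thesis by linarith
  qed
  have form: "\<exists>\<alpha> \<psi>. norm \<psi> = 1 \<and> 0 \<le> \<alpha> \<and> \<alpha> \<le> 1 / real CARD('d) \<and> M' j = \<alpha> *\<^sub>R proj \<psi>"
    if "j < n'" for j
  proof -
    define l where "l = L!j"
    have l: "l < n" "M l \<noteq> 0" "m l > 0" using Lj[OF that] by (auto simp: l_def)
    define c where "c = 1 / norm (\<phi> l)"
    have np: "norm (\<phi> l) > 0" using phinz[OF l(1,2)] by simp
    define \<psi> where "\<psi> = c *\<^sub>R \<phi> l"
    define \<alpha> where "\<alpha> = tr l / real (m l)"
    have n1: "norm \<psi> = 1" using np by (simp add: \<psi>_def c_def)
    have a0: "0 \<le> \<alpha>" using trpos[OF l(1,2)] by (simp add: \<alpha>_def)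
    have a1: "\<alpha> \<le> 1 / real CARD('d)"
      using mge[OF l(1,2)] l(3) dpos by (simp add: \<alpha>_def d_def field_simps)
    have "\<alpha> *\<^sub>R proj \<psi> = (\<alpha> * (c * c)) *\<^sub>R proj (\<phi> l)" by (simp add: \<psi>_def proj_scale)
    also have "\<alpha> * (c * c) = 1 / real (m l)"
      using trphi[OF l(1,2)] np by (simp add: \<alpha>_def c_def power2_eq_square)
    finally have "M' j = \<alpha> *\<^sub>R proj \<psi>" using Mphi[OF l(1,2)] by (simp add: M'_def l_def)
    then show ?thesis using n1 a0 a1 by blast
  qed
  show ?thesis
    using povm' pp app bound form unfolding d_def by blast
qed

end
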